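(* Let $\mathcal{R}$ be a finite family of axis-parallel rectangles in general position in which every pair of intersecting rectangles has a corner intersection. Then $\mathrm{tw}(G_{\mathcal{R}})\le 2\cdot\mathrm{tw}(A_{\mathcal{R}})+1$.
   Context: Rectangles are closed axis-parallel rectangles $X\times Y$; general position means all specifying intervals have pairwise distinct endpoints. Two intersecting rectangles have a corner intersection if one contains one or two corners of the other but neither contains the other. $G_{\mathcal{R}}$ is the intersection graph (vertices $\mathcal{R}$, edges between distinct intersecting rectangles). A joint is a point where the boundaries of two distinct rectangles intersect; the arrangement graph $A_{\mathcal{R}}$ has the joints as vertices, and $\{u,v\}$ is an edge iff $u,v$ are joints on the boundary of some rectangle with no other joint on that boundary between them. $\mathrm{tw}$ denotes treewidth: the minimum over tree decompositions (a tree whose nodes are vertex subsets covering all vertices and edges, with the nodes containing any fixed vertex forming a connected subtree) of the maximum node size minus one. *)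

theory Defs
  imports "HOL-Analysis.Analysis"
begin

datatype rect = Rect (xl: real) (xr: real) (yl: real) (yh: real)

definition valid_rect :: "rect \<Rightarrow> bool" where
  "valid_rect r \<longleftrightarrow> xl r < xr r \<and> yl r < yh r"

definition rset :: "rect \<Rightarrow> (real \<times> real) set" where
  "rset r = {(x, y). xl r \<le> x \<and> x \<le> xr r \<and> yl r \<le> y \<and> y \<le> yh r}"

definition corners :: "rect \<Rightarrow> (real \<times> real) set" where
  "corners r = {(xl r, yl r), (xl r, yh r), (xr r, yl r), (xr r, yh r)}"

definition bd :: "rect \<Rightarrow> (real \<times> real) set" where
  "bd r = {(x, y). (x, y) \<in> rset r \<and> (x = xl r \<or> x = xr r \<or> y = yl r \<or> y = yh r)}"

text \<open>General position: all x-endpoints pairwise distinct, all y-endpoints pairwise distinct.\<close>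
definition general_position :: "rect set \<Rightarrow> bool" where
  "general_position R \<longleftrightarrow>
     inj_on (\<lambda>(r, b::bool). if b then xl r else xr r) (R \<times> UNIV) \<and>
     inj_on (\<lambda>(r, b::bool). if b then yl r else yh r) (R \<times> UNIV)"

definition corner_intersection :: "rect \<Rightarrow> rect \<Rightarrow> bool" where
  "corner_intersection r s \<longleftrightarrow>
     rset r \<inter> rset s \<noteq> {} \<and> \<not> rset r \<subseteq> rset s \<and> \<not> rset s \<subseteq> rset r \<and>
     (card (corners s \<inter> rset r) \<in> {1, 2} \<or> card (corners r \<inter> rset s) \<in> {1, 2})"

definition int_edges :: "rect set \<Rightarrow> rect set set" where
  "int_edges R = {{r, s} | r s. r \<in> R \<and> s \<in> R \<and> r \<noteq> s \<and> rset r \<inter> rset s \<noteq> {}}"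

definition joints :: "rect set \<Rightarrow> (real \<times> real) set" where
  "joints R = {p. \<exists>r\<in>R. \<exists>s\<in>R. r \<noteq> s \<and> p \<in> bd r \<and> p \<in> bd s}"

text \<open>Arrangement graph: u, v joints on the boundary of some rectangle r, consecutive along
  that boundary, i.e. joined by an arc of the boundary containing no further joint.\<close>
definition arr_edges :: "rect set \<Rightarrow> (real \<times> real) set set" where
  "arr_edges R = {{u, v} | u v. u \<noteq> v \<and> u \<in> joints R \<and> v \<in> joints R \<and>
      (\<exists>r\<in>R. u \<in> bd r \<and> v \<in> bd r \<and>
         (\<exists>A \<subseteq> bd r. connected A \<and> u \<in> A \<and> v \<in> A \<and> A \<inter> joints R = {u, v}))}"

definition tree_adj :: "nat set set \<Rightarrow> nat set \<Rightarrow> (nat \<times> nat) set" where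
  "tree_adj TE S = {(a, b). {a, b} \<in> TE \<and> a \<in> S \<and> b \<in> S}"

definition is_tree :: "nat set \<Rightarrow> nat set set \<Rightarrow> bool" where
  "is_tree N TE \<longleftrightarrow> finite N \<and> N \<noteq> {} \<and>
     TE \<subseteq> {{a, b} | a b. a \<in> N \<and> b \<in> N \<and> a \<noteq> b} \<and>
     (\<forall>a\<in>N. \<forall>b\<in>N. (a, b) \<in> (tree_adj TE N)\<^sup>*) \<and>
     card TE = card N - 1"

definition tree_decomposition ::
  "'a set \<Rightarrow> 'a set set \<Rightarrow> nat set \<Rightarrow> nat set set \<Rightarrow> (nat \<Rightarrow> 'a set) \<Rightarrow> bool" where
  "tree_decomposition V E N TE B \<longleftrightarrow> is_tree N TE \<and>
     (\<forall>t\<in>N. B t \<subseteq> V) \<and>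
     (\<forall>v\<in>V. \<exists>t\<in>N. v \<in> B t) \<and>
     (\<forall>e\<in>E. \<exists>t\<in>N. e \<subseteq> B t) \<and>
     (\<forall>v\<in>V. \<forall>t1\<in>{t\<in>N. v \<in> B t}. \<forall>t2\<in>{t\<in>N. v \<in> B t}.
        (t1, t2) \<in> (tree_adj TE {t\<in>N. v \<in> B t})\<^sup>*)"

text \<open>Width = max bag size minus one (natural-number subtraction, so the empty graph has width 0).\<close>
definition td_width :: "nat set \<Rightarrow> (nat \<Rightarrow> 'a set) \<Rightarrow> nat" where
  "td_width N B = Max (card ` B ` N) - 1"

definition treewidth :: "'a set \<Rightarrow> 'a set set \<Rightarrow> nat" where
  "treewidth V E = Min {w. \<exists>N TE B. tree_decomposition V E N TE B \<and> w = td_width N B}"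

end

theory Submission
  imports Defs
begin


definition gam :: "rect \<Rightarrow> real \<Rightarrow> real \<times> real" where
 "gam r t = (if t \<le> 1/4 then (xl r + 4*t*(xr r - xl r), yl r)
   else if t \<le> 1/2 then (xr r, yl r + (4*t-1)*(yh r - yl r))
   else if t \<le> 3/4 then (xr r - (4*t-2)*(xr r - xl r), yh r)
   else (xl r, yh r - (4*t-3)*(yh r - yl r)))"

definition tau :: "rect \<Rightarrow> real \<times> real \<Rightarrow> real" where
 "tau r p = (if snd p = yl r \<and> fst p < xr r then (fst p - xl r)/(4*(xr r - xl r))
   else if fst p = xr r \<and> snd p < yh r then 1/4 + (snd p - yl r)/(4*(yh r - yl r))
   else if snd p = yh r \<and> xl r < fst p then 1/2 + (xr r - fst p)/(4*(xr r - xl r))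
   else 3/4 + (yh r - snd p)/(4*(yh r - yl r)))"

lemma tau_gam: assumes "valid_rect r" "0 \<le> t" "t < 1" shows "tau r (gam r t) = t"
proof -
  have w: "xl r < xr r" and h: "yl r < yh r" using assms(1) by (auto simp: valid_rect_def)
  consider "t < 1/4" | "t = 1/4" | "1/4 < t \<and> t < 1/2" | "t = 1/2" | "1/2 < t \<and> t < 3/4"
    | "t = 3/4" | "3/4 < t" by linarith
  then show ?thesis
  proof cases
    case 1
    have "4*t*(xr r - xl r) < 1*(xr r - xl r)" using 1 w by (intro mult_strict_right_mono) auto
    then have "xl r + 4*t*(xr r - xl r) < xr r" by simp
    then show ?thesis using 1 w by (simp add: gam_def tau_def field_simps)
  next
    case 2 then show ?thesis unfolding 2 using w h by (simp add: gam_def tau_def)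
  next
    case 3
    have "(4*t-1)*(yh r - yl r) < 1*(yh r - yl r)" using 3 h by (intro mult_strict_right_mono) auto
    moreover have "0 < (4*t-1)*(yh r - yl r)" using 3 h by simp
    ultimately have a: "yl r + (4*t-1)*(yh r - yl r) < yh r" "yl r < yl r + (4*t-1)*(yh r - yl r)" by simp_all
    show ?thesis using 3 a w h by (simp add: gam_def tau_def field_simps)
  next
    case 4 then show ?thesis unfolding 4 using w h by (simp add: gam_def tau_def)
  next
    case 5
    have "(4*t-2)*(xr r - xl r) < 1*(xr r - xl r)" using 5 w by (intro mult_strict_right_mono) auto
    moreover have "0 < (4*t-2)*(xr r - xl r)" using 5 w by simp
    ultimately have a: "xl r < xr r - (4*t-2)*(xr r - xl r)" "xr r - (4*t-2)*(xr r - xl r) < xr r" by simp_all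
    show ?thesis using 5 a w h by (simp add: gam_def tau_def field_simps)
  next
    case 6 then show ?thesis unfolding 6 using w h by (simp add: gam_def tau_def)
  next
    case 7
    have "(4*t-3)*(yh r - yl r) < 1*(yh r - yl r)" using 7 assms(3) h by (intro mult_strict_right_mono) auto
    moreover have "0 < (4*t-3)*(yh r - yl r)" using 7 h by simp
    ultimately have a: "yh r - (4*t-3)*(yh r - yl r) < yh r" "yl r < yh r - (4*t-3)*(yh r - yl r)" by simp_all
    show ?thesis using 7 a w h by (simp add: gam_def tau_def field_simps)
  qed
qed



lemma gam_tau: assumes "valid_rect r" "p \<in> bd r" shows "gam r (tau r p) = p"
proof -
  obtain x y where p: "p = (x,y)" by force
  have w: "xl r < xr r" and h: "yl r < yh r" using assms(1) by (auto simp: valid_rect_def)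
  have b: "xl r \<le> x" "x \<le> xr r" "yl r \<le> y" "y \<le> yh r" "x = xl r \<or> x = xr r \<or> y = yl r \<or> y = yh r"
    using assms(2) by (auto simp: bd_def rset_def p)
  define W where "W = xr r - xl r"
  define H where "H = yh r - yl r"
  have W: "W > 0" "xr r = xl r + W" using w by (auto simp: W_def)
  have H: "H > 0" "yh r = yl r + H" using h by (auto simp: H_def)
  consider "y = yl r \<and> x < xr r" | "\<not> (y = yl r \<and> x < xr r) \<and> x = xr r \<and> y < yh r"
   | "\<not> (y = yl r \<and> x < xr r) \<and> \<not> (x = xr r \<and> y < yh r) \<and> y = yh r \<and> xl r < x"
   | "\<not> (y = yl r \<and> x < xr r) \<and> \<not> (x = xr r \<and> y < yh r) \<and> \<not> (y = yh r \<and> xl r < x)" by blast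
  then show ?thesis
  proof cases
    case 1
    define t where "t = (x - xl r) / (4 * W)"
    have t: "tau r p = t" using 1 by (simp add: tau_def p W_def t_def)
    have t1: "t \<le> 1/4" using 1 W by (simp add: field_simps t_def)
    have t2: "4 * t * W = x - xl r" using W by (simp add: t_def)
    have "gam r t = (xl r + 4*t*W, yl r)" using t1 by (simp add: gam_def W_def)
    then show ?thesis using 1 t t2 p by simp
  next
    case 2
    define t where "t = 1/4 + (y - yl r) / (4 * H)"
    have t: "tau r p = t" using 2 by (simp add: tau_def p H_def t_def)
    have t2: "(4*t - 1) * H = y - yl r" using H by (simp add: t_def field_simps)
    show ?thesis
    proof (cases "y = yl r")
      case True
      then have "t = 1/4" by (simp add: t_def)
      then show ?thesis using 2 W True t unfolding p by (simp add: gam_def)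
    next
      case False
      then have t1: "1/4 < t" "t \<le> 1/2" using 2 b H
        by (auto simp: field_simps t_def)
      have "gam r t = (xr r, yl r + (4*t-1)*H)" using t1 by (simp add: gam_def H_def)
      then show ?thesis using 2 t t2 p by simp
    qed
  next
    case 3
    define t where "t = 1/2 + (xr r - x) / (4 * W)"
    have t: "tau r p = t" using 3 h by (simp add: tau_def p W_def t_def)
    have t2: "(4*t - 2) * W = xr r - x" using W by (simp add: t_def field_simps)
    show ?thesis
    proof (cases "x = xr r")
      case True
      then have "t = 1/2" by (simp add: t_def)
      then show ?thesis using 3 H True t unfolding p by (simp add: gam_def)
    next
      case False
      then have t1: "1/2 < t" "t \<le> 3/4" using 3 b W
        by (auto simp: field_simps t_def)
      have "gam r t = (xr r - (4*t-2)*W, yh r)" using t1 by (simp add: gam_def W_def)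
      then show ?thesis using 3 t t2 p by simp
    qed
  next
    case 4
    have x: "x = xl r" and yy: "yl r < y" using 4 b w h by (auto simp: less_le)
    define t where "t = 3/4 + (yh r - y) / (4 * H)"
    have t: "tau r p = t" using 4 by (auto simp: tau_def p H_def t_def)
    have t2: "(4*t - 3) * H = yh r - y" using H by (simp add: t_def field_simps)
    show ?thesis
    proof (cases "y = yh r")
      case True
      then have "t = 3/4" by (simp add: t_def)
      then show ?thesis using 4 W x True t unfolding p by (simp add: gam_def)
    next
      case False
      then have t1: "3/4 < t" using 4 b H
        by (auto simp: field_simps t_def)
      have "gam r t = (xl r, yh r - (4*t-3)*H)" using t1 by (simp add: gam_def H_def)
      then show ?thesis using 4 x t t2 p by simp
    qed
  qed
qed



lemma gam_cont: "continuous_on UNIV (gam r)"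
proof -
  have "continuous_on UNIV (\<lambda>t. if t \<le> 1/4 then (xl r + 4*t*(xr r - xl r), yl r)
   else (if t \<le> 1/2 then (xr r, yl r + (4*t-1)*(yh r - yl r))
   else if t \<le> 3/4 then (xr r - (4*t-2)*(xr r - xl r), yh r)
   else (xl r, yh r - (4*t-3)*(yh r - yl r))))"
    apply (rule continuous_on_cases_le)
       apply (auto intro!: continuous_intros)[1]
      apply (rule continuous_on_cases_le)
         apply (auto intro!: continuous_intros)[1]
        apply (rule continuous_on_cases_le)
           apply (auto intro!: continuous_intros)[3]
        subgoal premises P for x unfolding P(2) by simp
       apply (auto intro!: continuous_intros)[1]
      subgoal premises P for x unfolding P(2) by simp
     apply (auto intro!: continuous_intros)[1]
    subgoal premises P for x unfolding P(2) by simp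
    done
  then show ?thesis unfolding gam_def[abs_def] by simp
qed

lemma gam_bd: assumes "valid_rect r" "0 \<le> t" "t \<le> 1" shows "gam r t \<in> bd r"
proof -
  define W where "W = xr r - xl r"
  define H where "H = yh r - yl r"
  have W: "W > 0" "xr r = xl r + W" using assms(1) by (auto simp: W_def valid_rect_def)
  have H: "H > 0" "yh r = yl r + H" using assms(1) by (auto simp: H_def valid_rect_def)
  consider "t \<le> 1/4" | "1/4 < t \<and> t \<le> 1/2" | "1/2 < t \<and> t \<le> 3/4" | "3/4 < t" by linarith
  then show ?thesis
  proof cases
    case 1
    have "0 \<le> 4*t*W" "4*t*W \<le> 1 * W" using 1 assms W by (auto intro!: mult_right_mono)
    then show ?thesis using 1 W H by (simp add: gam_def bd_def rset_def W_def[symmetric])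
  next
    case 2
    have "0 \<le> (4*t-1)*H" "(4*t-1)*H \<le> 1 * H" using 2 assms H by (auto intro!: mult_right_mono)
    then show ?thesis using 2 W H by (simp add: gam_def bd_def rset_def H_def[symmetric])
  next
    case 3
    have "0 \<le> (4*t-2)*W" "(4*t-2)*W \<le> 1 * W" using 3 assms W by (auto intro!: mult_right_mono)
    then show ?thesis using 3 W H by (simp add: gam_def bd_def rset_def W_def[symmetric])
  next
    case 4
    have "0 \<le> (4*t-3)*H" "(4*t-3)*H \<le> 1 * H" using 4 assms H by (auto intro!: mult_right_mono)
    then show ?thesis using 4 W H by (simp add: gam_def bd_def rset_def H_def[symmetric])
  qed
qed

lemma tau_range: assumes "valid_rect r" "p \<in> bd r" shows "0 \<le> tau r p \<and> tau r p < 1"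
proof -
  obtain x y where p: "p = (x,y)" by force
  have w: "xl r < xr r" and h: "yl r < yh r" using assms(1) by (auto simp: valid_rect_def)
  have b: "xl r \<le> x" "x \<le> xr r" "yl r \<le> y" "y \<le> yh r" "x = xl r \<or> x = xr r \<or> y = yl r \<or> y = yh r"
    using assms(2) by (auto simp: bd_def rset_def p)
  consider "y = yl r \<and> x < xr r" | "\<not> (y = yl r \<and> x < xr r) \<and> x = xr r \<and> y < yh r"
   | "\<not> (y = yl r \<and> x < xr r) \<and> \<not> (x = xr r \<and> y < yh r) \<and> y = yh r \<and> xl r < x"
   | "\<not> (y = yl r \<and> x < xr r) \<and> \<not> (x = xr r \<and> y < yh r) \<and> \<not> (y = yh r \<and> xl r < x)" by blast
  then show ?thesis
  proof cases
    case 1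
    then have t: "tau r p = (x - xl r) / (4 * (xr r - xl r))" by (simp add: tau_def p)
    show ?thesis unfolding t using 1 b w by (simp add: field_simps)
  next
    case 2
    then have t: "tau r p = 1/4 + (y - yl r) / (4 * (yh r - yl r))" by (auto simp add: tau_def p)
    show ?thesis unfolding t using 2 b h by (simp add: field_simps)
  next
    case 3
    then have t: "tau r p = 1/2 + (xr r - x) / (4 * (xr r - xl r))" by (auto simp add: tau_def p)
    show ?thesis unfolding t using 3 b w by (simp add: field_simps)
  next
    case 4
    have yy: "yl r < y" using 4 b w h by (auto simp: less_le)
    from 4 have t: "tau r p = 3/4 + (yh r - y) / (4 * (yh r - yl r))" by (auto simp add: tau_def p)
    show ?thesis unfolding t using yy b h by (simp add: field_simps)
  qed
qed



lemma gpx: assumes "general_position R" "r \<in> R" "s \<in> R" "r \<noteq> s"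
  shows "xl r \<noteq> xl s \<and> xl r \<noteq> xr s \<and> xr r \<noteq> xr s \<and> xr r \<noteq> xl s \<and>
         yl r \<noteq> yl s \<and> yl r \<noteq> yh s \<and> yh r \<noteq> yh s \<and> yh r \<noteq> yl s"
proof -
  have i1: "inj_on (\<lambda>(r, b::bool). if b then xl r else xr r) (R \<times> UNIV)"
   and i2: "inj_on (\<lambda>(r, b::bool). if b then yl r else yh r) (R \<times> UNIV)"
    using assms(1) by (auto simp: general_position_def)
  have "xl r \<noteq> xl s" using inj_onD[OF i1, of "(r,True)" "(s,True)"] assms by auto
  moreover have "xl r \<noteq> xr s" using inj_onD[OF i1, of "(r,True)" "(s,False)"] assms by auto
  moreover have "xr r \<noteq> xr s" using inj_onD[OF i1, of "(r,False)" "(s,False)"] assms by auto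
  moreover have "xr r \<noteq> xl s" using inj_onD[OF i1, of "(r,False)" "(s,True)"] assms by auto
  moreover have "yl r \<noteq> yl s" using inj_onD[OF i2, of "(r,True)" "(s,True)"] assms by auto
  moreover have "yl r \<noteq> yh s" using inj_onD[OF i2, of "(r,True)" "(s,False)"] assms by auto
  moreover have "yh r \<noteq> yh s" using inj_onD[OF i2, of "(r,False)" "(s,False)"] assms by auto
  moreover have "yh r \<noteq> yl s" using inj_onD[OF i2, of "(r,False)" "(s,True)"] assms by auto
  ultimately show ?thesis by blast
qed

lemma bd_coord: "p \<in> bd r \<Longrightarrow> (fst p = xl r \<or> fst p = xr r) \<or> (snd p = yl r \<or> snd p = yh r)"
  by (auto simp: bd_def)

lemma bd_three: assumes "general_position R" "r \<in> R" "s \<in> R" "t \<in> R" "r \<noteq> s" "r \<noteq> t" "s \<noteq> t"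
  "p \<in> bd r" "p \<in> bd s" "p \<in> bd t" shows False
  using gpx[OF assms(1,2,3,5)] gpx[OF assms(1,2,4,6)] gpx[OF assms(1,3,4,7)]
    bd_coord[OF assms(8)] bd_coord[OF assms(9)] bd_coord[OF assms(10)] by metis

lemma card_bd_le2: assumes "general_position R" "finite R" shows "card {r\<in>R. p \<in> bd r} \<le> 2"
proof (rule ccontr)
  let ?S = "{r\<in>R. p \<in> bd r}"
  assume "\<not> ?thesis"
  then have c: "card ?S > 2" by simp
  have f: "finite ?S" using assms(2) by simp
  then obtain r where r: "r \<in> ?S" using c by (metis card.empty all_not_in_conv not_less_zero)
  have c1: "card (?S - {r}) > 1" using c r f by (simp add: card_Diff_singleton)
  then obtain s where s: "s \<in> ?S - {r}" by (metis card.empty all_not_in_conv not_less_zero)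
  have "card (?S - {r} - {s}) > 0" using c1 s f by (simp add: card_Diff_singleton)
  then obtain t where t: "t \<in> ?S - {r} - {s}" by (metis card.empty all_not_in_conv less_irrefl)
  show False using bd_three[OF assms(1), of r s t p] r s t by auto
qed

definition cand :: "rect \<Rightarrow> rect \<Rightarrow> (real \<times> real) set" where
  "cand r s = {(xl r, yl s), (xl r, yh s), (xr r, yl s), (xr r, yh s),
               (xl s, yl r), (xl s, yh r), (xr s, yl r), (xr s, yh r)}"

lemma bd_bd_cand: assumes "general_position R" "r \<in> R" "s \<in> R" "r \<noteq> s" "p \<in> bd r" "p \<in> bd s"
  shows "p \<in> cand r s"
  using gpx[OF assms(1-4)] bd_coord[OF assms(5)] bd_coord[OF assms(6)]
  by (cases p) (auto simp: cand_def)

lemma finite_joints: assumes "general_position R" "finite R" shows "finite (joints R)"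
proof -
  have "joints R \<subseteq> (\<Union>r\<in>R. \<Union>s\<in>R. cand r s)"
    using bd_bd_cand[OF assms(1)] unfolding joints_def by blast
  moreover have "finite (\<Union>r\<in>R. \<Union>s\<in>R. cand r s)" using assms(2) by (simp add: cand_def)
  ultimately show ?thesis by (rule finite_subset)
qed

lemma interval_aux:
  fixes a1 a2 b1 b2 c1 c2 d1 d2 :: real
  assumes "a1 < a2" "b1 < b2" "c1 < c2" "d1 < d2" "a1 \<le> c2" "c1 \<le> a2" "b1 \<le> d2" "d1 \<le> b2"
   "\<not>(c1\<le>a1 \<and> a2\<le>c2 \<and> d1\<le>b1 \<and> b2\<le>d2)" "\<not>(a1\<le>c1 \<and> c2\<le>a2 \<and> b1\<le>d1 \<and> d2\<le>b2)"
  shows "((c1\<le>a1\<and>a1\<le>c2) \<or> (c1\<le>a2\<and>a2\<le>c2)) \<and> ((b1\<le>d1\<and>d1\<le>b2) \<or> (b1\<le>d2\<and>d2\<le>b2)) \<or>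
         ((a1\<le>c1\<and>c1\<le>a2) \<or> (a1\<le>c2\<and>c2\<le>a2)) \<and> ((d1\<le>b1\<and>b1\<le>d2)\<or>(d1\<le>b2\<and>b2\<le>d2))"
  using assms by smt

lemma shared_bd: assumes "valid_rect r" "valid_rect s" "rset r \<inter> rset s \<noteq> {}"
  "\<not> rset r \<subseteq> rset s" "\<not> rset s \<subseteq> rset r"
  shows "\<exists>p. p \<in> bd r \<and> p \<in> bd s"
proof -
  have n1: "\<not>(xl s\<le>xl r \<and> xr r\<le>xr s \<and> yl s\<le>yl r \<and> yh r\<le>yh s)"
    using assms(4) by (auto simp: rset_def)
  have n2: "\<not>(xl r\<le>xl s \<and> xr s\<le>xr r \<and> yl r\<le>yl s \<and> yh s\<le>yh r)"
    using assms(5) by (auto simp: rset_def)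
  obtain a b where ab: "(a,b) \<in> rset r" "(a,b) \<in> rset s" using assms(3) by auto
  have ov: "xl r \<le> xr s" "xl s \<le> xr r" "yl r \<le> yh s" "yl s \<le> yh r" using ab by (auto simp: rset_def)
  have v: "xl r < xr r" "yl r < yh r" "xl s < xr s" "yl s < yh s"
    using assms(1,2) by (auto simp: valid_rect_def)
  have "\<exists>p\<in>cand r s. p \<in> rset r \<and> p \<in> rset s"
    using interval_aux[OF v(1) v(2) v(3) v(4) ov n1 n2] v unfolding cand_def rset_def by auto
  then obtain p where "p \<in> cand r s" "p \<in> rset r" "p \<in> rset s" by blast
  then show ?thesis unfolding cand_def bd_def by auto
qed



lemma td_trivial: assumes "\<forall>e\<in>E. e \<subseteq> V"
  shows "tree_decomposition V E {0} {} (\<lambda>_. V)"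
  using assms unfolding tree_decomposition_def is_tree_def tree_adj_def by auto

lemma td_parts: assumes "tree_decomposition V E N TE B"
  shows "is_tree N TE" "\<forall>t\<in>N. B t \<subseteq> V" "\<forall>v\<in>V. \<exists>t\<in>N. v \<in> B t" "\<forall>e\<in>E. \<exists>t\<in>N. e \<subseteq> B t"
   "\<forall>v\<in>V. \<forall>t1\<in>{t\<in>N. v \<in> B t}. \<forall>t2\<in>{t\<in>N. v \<in> B t}.
        (t1, t2) \<in> (tree_adj TE {t\<in>N. v \<in> B t})\<^sup>*"
  using assms unfolding tree_decomposition_def by blast+

lemma tree_parts: assumes "is_tree N TE"
  shows "finite N" "N \<noteq> {}" "TE \<subseteq> {{a, b} | a b. a \<in> N \<and> b \<in> N \<and> a \<noteq> b}"
     "\<forall>a\<in>N. \<forall>b\<in>N. (a, b) \<in> (tree_adj TE N)\<^sup>*" "card TE = card N - 1"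
  using assms unfolding is_tree_def by blast+

lemma td_finite_N: "tree_decomposition V E N TE B \<Longrightarrow> finite N \<and> N \<noteq> {}"
  using tree_parts(1,2)[OF td_parts(1)] by blast

lemma td_width_le_card: assumes "finite V" "tree_decomposition V E N TE B"
  shows "td_width N B \<le> card V"
proof -
  have N: "finite N" "N \<noteq> {}" using td_finite_N[OF assms(2)] by auto
  have "\<forall>t\<in>N. card (B t) \<le> card V" using td_parts(2)[OF assms(2)] assms(1)
    by (simp add: card_mono)
  then have "Max (card ` B ` N) \<le> card V" using N by (simp add: Max_le_iff)
  then show ?thesis by (simp add: td_width_def)
qed

lemma tw_set_finite: assumes "finite V"
  shows "finite {w. \<exists>N TE B. tree_decomposition V E N TE B \<and> w = td_width N B}"
proof (rule finite_subset)
  show "{w. \<exists>N TE B. tree_decomposition V E N TE B \<and> w = td_width N B} \<subseteq> {..card V}"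
  proof
    fix w assume "w \<in> {w. \<exists>N TE B. tree_decomposition V E N TE B \<and> w = td_width N B}"
    then obtain N TE B where "tree_decomposition V E N TE B" "w = td_width N B"
      unfolding mem_Collect_eq by (elim exE conjE)
    then show "w \<in> {..card V}" using td_width_le_card[OF assms] by simp
  qed
qed simp

lemma tw_attained: assumes "finite V" "\<forall>e\<in>E. e \<subseteq> V"
  shows "\<exists>N TE B. tree_decomposition V E N TE B \<and> td_width N B = treewidth V E"
proof -
  let ?W = "{w. \<exists>N TE B. tree_decomposition V E N TE B \<and> w = td_width N B}"
  have "td_width {0} (\<lambda>_. V) \<in> ?W" unfolding mem_Collect_eq
    by (intro exI conjI, rule td_trivial[OF assms(2)], rule refl)
  then have "?W \<noteq> {}" by (intro notI) simp
  then have "Min ?W \<in> ?W" using tw_set_finite[OF assms(1)] by (rule Min_in[rotated])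
  then obtain N TE B where "tree_decomposition V E N TE B" "Min ?W = td_width N B"
    unfolding mem_Collect_eq by (elim exE conjE)
  then show ?thesis unfolding treewidth_def by (intro exI conjI) (assumption, rule sym)
qed

lemma tw_le: assumes "finite V" "tree_decomposition V E N TE B"
  shows "treewidth V E \<le> td_width N B"
proof -
  have "td_width N B \<in> {w. \<exists>N TE B. tree_decomposition V E N TE B \<and> w = td_width N B}"
    unfolding mem_Collect_eq by (intro exI conjI, rule assms(2), rule refl)
  then show ?thesis unfolding treewidth_def using tw_set_finite[OF assms(1), of E] by (rule Min_le[rotated])
qed

lemma bag_le: assumes "tree_decomposition V E N TE B" "t \<in> N"
  shows "card (B t) \<le> td_width N B + 1"
proof -
  have N: "finite N" using td_finite_N[OF assms(1)] by auto
  have "card (B t) \<le> Max (card ` B ` N)" using N assms(2) by (simp add: Max_ge)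
  then show ?thesis by (simp add: td_width_def)
qed

lemma width_le: assumes "tree_decomposition V E N TE B" "\<forall>t\<in>N. card (B t) \<le> c"
  shows "td_width N B \<le> c - 1"
proof -
  have N: "finite N" "N \<noteq> {}" using td_finite_N[OF assms(1)] by auto
  have "Max (card ` B ` N) \<le> c" using N assms(2) by (simp add: Max_le_iff)
  then show ?thesis by (simp add: td_width_def)
qed

lemma tree_adj_mono: "TE \<subseteq> TE' \<Longrightarrow> S \<subseteq> S' \<Longrightarrow> tree_adj TE S \<subseteq> tree_adj TE' S'"
  by (auto simp: tree_adj_def)

lemma rtr_mono: "TE \<subseteq> TE' \<Longrightarrow> S \<subseteq> S' \<Longrightarrow> (a,b) \<in> (tree_adj TE S)\<^sup>* \<Longrightarrow> (a,b) \<in> (tree_adj TE' S')\<^sup>*"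
  using rtrancl_mono[OF tree_adj_mono] by blast

lemma td_add_leaf:
  assumes td: "tree_decomposition V E N TE B" and v: "v \<notin> V" and n: "n \<notin> N" and t0: "t0 \<in> N"
  shows "tree_decomposition (insert v V) E (insert n N) (insert {t0, n} TE) (B(n := {v}))"
proof -
  have tr: "is_tree N TE" and Bs: "\<forall>t\<in>N. B t \<subseteq> V" and cov: "\<forall>v\<in>V. \<exists>t\<in>N. v \<in> B t"
   and ed: "\<forall>e\<in>E. \<exists>t\<in>N. e \<subseteq> B t"
   and con: "\<forall>v\<in>V. \<forall>t1\<in>{t\<in>N. v \<in> B t}. \<forall>t2\<in>{t\<in>N. v \<in> B t}.
        (t1, t2) \<in> (tree_adj TE {t\<in>N. v \<in> B t})\<^sup>*"
    using td_parts[OF td] by simp_all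
  have fN: "finite N" and neN: "N \<noteq> {}" and TEs: "TE \<subseteq> {{a, b} | a b. a \<in> N \<and> b \<in> N \<and> a \<noteq> b}"
   and conN: "\<forall>a\<in>N. \<forall>b\<in>N. (a, b) \<in> (tree_adj TE N)\<^sup>*" and cTE: "card TE = card N - 1"
    using tree_parts[OF tr] by simp_all
  let ?N = "insert n N" and ?TE = "insert {t0, n} TE"
  have "TE \<subseteq> (\<lambda>(a,b). {a,b}) ` (N \<times> N)" using TEs by auto
  then have fTE: "finite TE" using fN by (meson finite_SigmaI finite_imageI finite_subset)
  have nTE: "{t0, n} \<notin> TE"
  proof
    assume "{t0, n} \<in> TE"
    then obtain a b where "{t0,n} = {a,b}" "a \<in> N" "b \<in> N" using TEs by blast
    then show False using n by (auto simp: doubleton_eq_iff)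
  qed
  have t0n: "t0 \<noteq> n" using t0 n by auto
  have e1: "(t0, n) \<in> tree_adj ?TE ?N" "(n, t0) \<in> tree_adj ?TE ?N" using t0 by (auto simp: tree_adj_def insert_commute)
  have old: "(a, b) \<in> (tree_adj ?TE ?N)\<^sup>*" if "a \<in> N" "b \<in> N" for a b
    using rtr_mono[of TE ?TE N ?N a b] conN that by auto
  have "is_tree ?N ?TE"
    unfolding is_tree_def
  proof (intro conjI ballI)
    show "finite ?N" using fN by simp
    show "?N \<noteq> {}" by simp
    show "?TE \<subseteq> {{a, b} | a b. a \<in> ?N \<and> b \<in> ?N \<and> a \<noteq> b}"
    proof (rule subsetI)
      fix e assume e: "e \<in> ?TE"
      show "e \<in> {{a, b} | a b. a \<in> ?N \<and> b \<in> ?N \<and> a \<noteq> b}"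
      proof (cases "e = {t0, n}")
        case True
        show ?thesis unfolding mem_Collect_eq True
          by (intro exI conjI) (rule refl, use t0 t0n in simp_all)
      next
        case False
        then have "e \<in> TE" using e by simp
        then have "e \<in> {{a, b} | a b. a \<in> N \<and> b \<in> N \<and> a \<noteq> b}" using TEs by (rule rev_subsetD)
        then obtain a b where ab: "e = {a,b}" "a \<in> N" "b \<in> N" "a \<noteq> b"
          unfolding mem_Collect_eq by (elim exE conjE)
        show ?thesis unfolding mem_Collect_eq
          by (intro exI conjI) (rule ab(1), use ab in simp_all)
      qed
    qed
    show "card ?TE = card ?N - 1" using fTE nTE fN n cTE neN
      by (simp add: card_gt_0_iff Suc_pred)
  next
    fix a b assume a: "a \<in> ?N" and b: "b \<in> ?N"
    show "(a, b) \<in> (tree_adj ?TE ?N)\<^sup>*"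
    proof (cases "a = n")
      case True
      show ?thesis
      proof (cases "b = n")
        case False then have "b \<in> N" using b by auto
        then show ?thesis using True old[OF t0] e1(2) by (meson converse_rtrancl_into_rtrancl)
      qed (simp add: True)
    next
      case False then have aN: "a \<in> N" using a by auto
      show ?thesis
      proof (cases "b = n")
        case True
        then show ?thesis using old[OF aN t0] e1(1) by (meson rtrancl_into_rtrancl)
      next
        case False then show ?thesis using old[OF aN] b by auto
      qed
    qed
  qed
  moreover have "\<forall>t\<in>?N. (B(n := {v})) t \<subseteq> insert v V" using Bs by auto
  moreover have "\<forall>w\<in>insert v V. \<exists>t\<in>?N. w \<in> (B(n := {v})) t"
  proof
    fix w assume w: "w \<in> insert v V"
    show "\<exists>t\<in>?N. w \<in> (B(n := {v})) t"
    proof (cases "w = v")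
      case True then show ?thesis by (intro bexI[of _ n]) simp_all
    next
      case False
      then have "w \<in> V" using w by simp
      then obtain t where "t \<in> N" "w \<in> B t" using cov by blast
      then show ?thesis using n by (intro bexI[of _ t]) auto
    qed
  qed
  moreover have "\<forall>e\<in>E. \<exists>t\<in>?N. e \<subseteq> (B(n := {v})) t"
  proof
    fix e assume "e \<in> E"
    then obtain t where "t \<in> N" "e \<subseteq> B t" using ed by blast
    then show "\<exists>t\<in>?N. e \<subseteq> (B(n := {v})) t" using n by (intro bexI[of _ t]) auto
  qed
  moreover have "\<forall>w\<in>insert v V. \<forall>t1\<in>{t\<in>?N. w \<in> (B(n := {v})) t}. \<forall>t2\<in>{t\<in>?N. w \<in> (B(n := {v})) t}.
        (t1, t2) \<in> (tree_adj ?TE {t\<in>?N. w \<in> (B(n := {v})) t})\<^sup>*"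
  proof (intro ballI)
    fix w t1 t2 assume w: "w \<in> insert v V" and t1: "t1 \<in> {t\<in>?N. w \<in> (B(n := {v})) t}"
      and t2: "t2 \<in> {t\<in>?N. w \<in> (B(n := {v})) t}"
    show "(t1, t2) \<in> (tree_adj ?TE {t\<in>?N. w \<in> (B(n := {v})) t})\<^sup>*"
    proof (cases "w = v")
      case True
      have "t1 = n" "t2 = n" using t1 t2 True Bs v by (auto split: if_splits)
      then show ?thesis by simp
    next
      case False
      then have wV: "w \<in> V" using w by auto
      have S: "{t\<in>?N. w \<in> (B(n := {v})) t} = {t\<in>N. w \<in> B t}" using False n by auto
      show ?thesis unfolding S using con wV t1 t2 S rtr_mono[of TE ?TE "{t\<in>N. w \<in> B t}" "{t\<in>N. w \<in> B t}" t1 t2]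
        by auto
    qed
  qed
  ultimately show ?thesis unfolding tree_decomposition_def by (intro conjI)
qed

lemma td_add_isolated:
  assumes "finite I"
  shows "tree_decomposition V E N TE B \<Longrightarrow> I \<inter> V = {} \<Longrightarrow> \<forall>t\<in>N. card (B t) \<le> c \<Longrightarrow> 1 \<le> c \<Longrightarrow>
    \<exists>N' TE' B'. tree_decomposition (V \<union> I) E N' TE' B' \<and> (\<forall>t\<in>N'. card (B' t) \<le> c)"
  using assms
proof (induction I rule: finite_induct)
  case empty then show ?case by auto
next
  case (insert x F)
  obtain N' TE' B' where td: "tree_decomposition (V \<union> F) E N' TE' B'" and c: "\<forall>t\<in>N'. card (B' t) \<le> c"
    using insert by auto
  have fN: "finite N'" "N' \<noteq> {}" using td_finite_N[OF td] by auto
  obtain n where n: "n \<notin> N'" using fN(1) by (meson ex_new_if_finite infinite_UNIV_nat)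
  obtain t0 where t0: "t0 \<in> N'" using fN(2) by blast
  have "x \<notin> V \<union> F" using insert by auto
  from td_add_leaf[OF td this n t0]
  have "tree_decomposition (V \<union> insert x F) E (insert n N') (insert {t0, n} TE') (B'(n := {x}))" by simp
  moreover have "\<forall>t\<in>insert n N'. card ((B'(n := {x})) t) \<le> c" using c insert.prems(4) n by auto
  ultimately show ?case by blast
qed



lemma tau_inj: assumes "valid_rect r" "p \<in> bd r" "q \<in> bd r" "tau r p = tau r q" shows "p = q"
  using gam_tau[OF assms(1,2)] gam_tau[OF assms(1,3)] assms(4) by metis

lemma cut_aux:
  assumes vr: "valid_rect r" and fJ: "finite (joints R)"
    and J: "J = {p \<in> joints R. p \<in> bd r}" and XY: "X \<inter> Y = {}" "X \<union> Y = J"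
    and x: "x \<in> X" and y: "y \<in> Y" and lt: "tau r x < tau r y" and rR: "r \<in> R"
  shows "\<exists>u\<in>X. \<exists>v\<in>Y. {u,v} \<in> arr_edges R"
proof -
  have fJr: "finite J" using fJ J by simp
  have Jbd: "\<And>p. p \<in> J \<Longrightarrow> p \<in> bd r" and Jj: "\<And>p. p \<in> J \<Longrightarrow> p \<in> joints R" using J by auto
  have xJ: "x \<in> J" and yJ: "y \<in> J" using x y XY by auto
  let ?T = "tau r ` {w\<in>Y. tau r x \<le> tau r w}"
  have fT: "finite ?T" using fJr XY by (intro finite_imageI) (auto intro: finite_subset)
  have yT: "tau r y \<in> ?T" using y lt by auto
  define b where "b = Min ?T"
  have "b \<in> ?T" unfolding b_def using fT yT by (intro Min_in) auto
  then obtain wb where wb: "wb \<in> Y" "tau r x \<le> tau r wb" "tau r wb = b" by auto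
  have bmin: "\<And>w. w \<in> Y \<Longrightarrow> tau r x \<le> tau r w \<Longrightarrow> b \<le> tau r w"
    unfolding b_def using fT by (intro Min_le) auto
  have wbJ: "wb \<in> J" using wb XY by auto
  have "x \<noteq> wb" using x wb XY by auto
  then have "tau r x \<noteq> b" using tau_inj[OF vr Jbd[OF xJ] Jbd[OF wbJ]] wb by auto
  then have xb: "tau r x < b" using wb by auto
  let ?L = "tau r ` {w\<in>J. tau r w < b}"
  have fL: "finite ?L" using fJr by simp
  have xL: "tau r x \<in> ?L" using xJ xb by auto
  define a where "a = Max ?L"
  have "a \<in> ?L" unfolding a_def using fL xL by (intro Max_in) auto
  then obtain wa where wa: "wa \<in> J" "tau r wa < b" "tau r wa = a" by auto
  have amax: "\<And>w. w \<in> J \<Longrightarrow> tau r w < b \<Longrightarrow> tau r w \<le> a"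
    unfolding a_def using fL by (intro Max_ge) auto
  have xa: "tau r x \<le> a" using amax[OF xJ xb] .
  have waX: "wa \<in> X"
  proof (rule ccontr)
    assume "wa \<notin> X"
    then have "wa \<in> Y" using wa XY by auto
    have "b \<le> tau r wa" by (rule bmin[OF \<open>wa \<in> Y\<close>]) (use xa wa in simp)
    with wa(2) show False by simp
  qed
  have ab: "a < b" using wa by auto
  have a0: "0 \<le> a" using tau_range[OF vr Jbd[OF wa(1)]] wa by auto
  have b1: "b < 1" using tau_range[OF vr Jbd[OF wbJ]] wb by auto
  define A where "A = gam r ` {a..b}"
  have conA: "connected A" unfolding A_def
    by (rule connected_continuous_image) (rule continuous_on_subset[OF gam_cont], auto)
  have waA: "wa \<in> A" unfolding A_def using ab gam_tau[OF vr Jbd[OF wa(1)]] wa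
    by (intro image_eqI[of _ _ a]) auto
  have wbA: "wb \<in> A" unfolding A_def using ab gam_tau[OF vr Jbd[OF wbJ]] wb
    by (intro image_eqI[of _ _ b]) auto
  have Abd: "A \<subseteq> bd r" unfolding A_def using gam_bd[OF vr] a0 b1 by auto
  have AJ: "A \<inter> joints R = {wa, wb}"
  proof
    show "{wa, wb} \<subseteq> A \<inter> joints R" using waA wbA Jj[OF wa(1)] Jj[OF wbJ] by auto
  next
    show "A \<inter> joints R \<subseteq> {wa, wb}"
    proof
      fix q assume q: "q \<in> A \<inter> joints R"
      then obtain t where t: "a \<le> t" "t \<le> b" "q = gam r t" unfolding A_def by auto
      have qJ: "q \<in> J" using q Abd J by auto
      have tq: "tau r q = t" using tau_gam[OF vr, of t] t a0 b1 by auto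
      show "q \<in> {wa, wb}"
      proof (cases "t < b")
        case True
        then have "t \<le> a" using amax[OF qJ] tq by auto
        then have "t = a" using t by auto
        then have "q = wa" using tau_inj[OF vr Jbd[OF qJ] Jbd[OF wa(1)]] tq wa by auto
        then show ?thesis by simp
      next
        case False
        then have "t = b" using t by auto
        then have "q = wb" using tau_inj[OF vr Jbd[OF qJ] Jbd[OF wbJ]] tq wb by auto
        then show ?thesis by simp
      qed
    qed
  qed
  have ne: "wa \<noteq> wb" using waX wb XY by auto
  have "{wa, wb} \<in> arr_edges R"
    unfolding arr_edges_def mem_Collect_eq
  proof (intro exI conjI)
    show "{wa, wb} = {wa, wb}" by (rule refl)
    show "wa \<noteq> wb" by (rule ne)
    show "wa \<in> joints R" "wb \<in> joints R" using Jj[OF wa(1)] Jj[OF wbJ] by auto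
    show "\<exists>r\<in>R. wa \<in> bd r \<and> wb \<in> bd r \<and>
         (\<exists>A \<subseteq> bd r. connected A \<and> wa \<in> A \<and> wb \<in> A \<and> A \<inter> joints R = {wa, wb})"
      using rR Jbd[OF wa(1)] Jbd[OF wbJ] Abd conA waA wbA AJ by blast
  qed
  then show ?thesis using waX wb(1) by blast
qed

lemma cut_edge:
  assumes vr: "valid_rect r" and fJ: "finite (joints R)" and rR: "r \<in> R"
    and J: "J = {p \<in> joints R. p \<in> bd r}" and X: "X \<subseteq> J" and x: "x \<in> X" and y: "y \<in> J - X"
  shows "\<exists>u\<in>X. \<exists>v\<in>J - X. {u,v} \<in> arr_edges R"
proof -
  have xJ: "x \<in> J" using x X by auto
  have "x \<noteq> y" using x y by auto
  then have ne: "tau r x \<noteq> tau r y" using tau_inj[OF vr, of x y] xJ y J by auto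
  show ?thesis
  proof (cases "tau r x < tau r y")
    case True
    show ?thesis by (rule cut_aux[OF vr fJ J _ _ x y True rR]) (use X in auto)
  next
    case False
    then have "tau r y < tau r x" using ne by auto
    have "\<exists>u\<in>J - X. \<exists>v\<in>X. {u,v} \<in> arr_edges R"
      by (rule cut_aux[of r R J "J - X" X y x]) (use vr fJ J X y x \<open>tau r y < tau r x\<close> rR in auto)
    then obtain u v where "u \<in> J - X" "v \<in> X" "{u,v} \<in> arr_edges R" by blast
    then show ?thesis by (metis insert_commute)
  qed
qed



lemma arr_edges_sub: "\<forall>e\<in>arr_edges R. e \<subseteq> joints R"
  unfolding arr_edges_def by blast

lemma mapped_td:
  assumes fR: "finite R" and vR: "\<forall>r\<in>R. valid_rect r" and gp: "general_position R"
    and ci: "\<forall>r\<in>R. \<forall>s\<in>R. r \<noteq> s \<and> rset r \<inter> rset s \<noteq> {} \<longrightarrow> corner_intersection r s"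
    and td: "tree_decomposition (joints R) (arr_edges R) N TE B"
  shows "tree_decomposition {r\<in>R. \<exists>p\<in>joints R. p \<in> bd r} (int_edges R) N TE
           (\<lambda>t. {r\<in>R. \<exists>p\<in>B t. p \<in> bd r})"
proof -
  let ?J = "joints R"
  let ?V = "{r\<in>R. \<exists>p\<in>?J. p \<in> bd r}"
  let ?B = "\<lambda>t. {r\<in>R. \<exists>p\<in>B t. p \<in> bd r}"
  have fJ: "finite ?J" using finite_joints[OF gp fR] .
  note P = td_parts[OF td]
  have tr: "is_tree N TE" using P(1) .
  have Bs: "\<forall>t\<in>N. B t \<subseteq> ?J" using P(2) .
  have cov: "\<forall>v\<in>?J. \<exists>t\<in>N. v \<in> B t" using P(3) .
  have ed: "\<forall>e\<in>arr_edges R. \<exists>t\<in>N. e \<subseteq> B t" using P(4) .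
  have con: "\<forall>v\<in>?J. \<forall>t1\<in>{t\<in>N. v \<in> B t}. \<forall>t2\<in>{t\<in>N. v \<in> B t}.
        (t1, t2) \<in> (tree_adj TE {t\<in>N. v \<in> B t})\<^sup>*" using P(5) .
  have f2: "\<forall>t\<in>N. ?B t \<subseteq> ?V"
  proof
    fix t assume t: "t \<in> N"
    show "?B t \<subseteq> ?V" using Bs t by blast
  qed
  have f3: "\<forall>r\<in>?V. \<exists>t\<in>N. r \<in> ?B t"
  proof
    fix r assume "r \<in> ?V"
    then obtain p where p: "r \<in> R" "p \<in> ?J" "p \<in> bd r" by blast
    then obtain t where "t \<in> N" "p \<in> B t" using cov by blast
    then show "\<exists>t\<in>N. r \<in> ?B t" using p by blast
  qed
  have f4: "\<forall>e\<in>int_edges R. \<exists>t\<in>N. e \<subseteq> ?B t"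
  proof
    fix e assume "e \<in> int_edges R"
    then obtain r s where e: "e = {r,s}" "r \<in> R" "s \<in> R" "r \<noteq> s" "rset r \<inter> rset s \<noteq> {}"
      unfolding int_edges_def mem_Collect_eq by (elim exE conjE) blast
    have "corner_intersection r s" using ci e by blast
    then have ns: "\<not> rset r \<subseteq> rset s" "\<not> rset s \<subseteq> rset r" unfolding corner_intersection_def by blast+
    obtain p where p: "p \<in> bd r" "p \<in> bd s" using shared_bd[OF _ _ e(5) ns] vR e by blast
    have pJ: "p \<in> ?J" unfolding joints_def using p e by blast
    then obtain t where "t \<in> N" "p \<in> B t" using cov by blast
    then show "\<exists>t\<in>N. e \<subseteq> ?B t" using p e by blast
  qed
  have f5: "\<forall>r\<in>?V. \<forall>t1\<in>{t\<in>N. r \<in> ?B t}. \<forall>t2\<in>{t\<in>N. r \<in> ?B t}.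
        (t1, t2) \<in> (tree_adj TE {t\<in>N. r \<in> ?B t})\<^sup>*"
  proof (intro ballI)
    fix r t1 t2 assume rV: "r \<in> ?V" and t1: "t1 \<in> {t\<in>N. r \<in> ?B t}" and t2: "t2 \<in> {t\<in>N. r \<in> ?B t}"
    define S where "S = {t\<in>N. r \<in> ?B t}"
    define Jr where "Jr = {p \<in> ?J. p \<in> bd r}"
    have rR: "r \<in> R" using rV by blast
    have vr: "valid_rect r" using vR rR by blast
    have SpS: "{t\<in>N. p \<in> B t} \<subseteq> S" if "p \<in> Jr" for p
      using that rR unfolding S_def Jr_def by blast
    have conp: "(ta, tb) \<in> (tree_adj TE S)\<^sup>*" if "p \<in> Jr" "ta \<in> N" "p \<in> B ta" "tb \<in> N" "p \<in> B tb" for p ta tb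
    proof -
      have "p \<in> ?J" using that(1) unfolding Jr_def by blast
      then have "(ta, tb) \<in> (tree_adj TE {t\<in>N. p \<in> B t})\<^sup>*" using con that by blast
      then show ?thesis using rtr_mono[of TE TE "{t\<in>N. p \<in> B t}" S] SpS[OF that(1)] by blast
    qed
    obtain p1 where p1: "p1 \<in> B t1" "p1 \<in> bd r" using t1 by blast
    have t1N: "t1 \<in> N" using t1 by blast
    have p1J: "p1 \<in> Jr" using p1 Bs t1N unfolding Jr_def by blast
    define Q where "Q = {q \<in> Jr. \<forall>t\<in>N. q \<in> B t \<longrightarrow> (t1, t) \<in> (tree_adj TE S)\<^sup>*}"
    have p1Q: "p1 \<in> Q" unfolding Q_def using p1J conp[OF p1J t1N p1(1)] by blast
    have QJ: "Q = Jr"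
    proof (rule ccontr)
      assume "Q \<noteq> Jr"
      moreover have QJr: "Q \<subseteq> Jr" unfolding Q_def by blast
      ultimately obtain y where y: "y \<in> Jr - Q" by blast
      from cut_edge[OF vr fJ rR Jr_def QJr p1Q y]
      obtain u v where uv: "u \<in> Q" "v \<in> Jr - Q" "{u,v} \<in> arr_edges R" by blast
      obtain ts where ts: "ts \<in> N" "{u,v} \<subseteq> B ts" using ed uv(3) by blast
      have uJ: "u \<in> Jr" using uv QJr by blast
      have vJ: "v \<in> Jr" using uv by blast
      have h1: "(t1, ts) \<in> (tree_adj TE S)\<^sup>*" using uv(1) ts unfolding Q_def by blast
      have h2: "(ts, t) \<in> (tree_adj TE S)\<^sup>*" if "t \<in> N" "v \<in> B t" for t
        using conp[OF vJ ts(1) _ that] ts by blast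
      have "v \<in> Q" unfolding Q_def
      proof (intro CollectI conjI allI ballI impI)
        show "v \<in> Jr" by (rule vJ)
        fix t assume "t \<in> N" "v \<in> B t"
        show "(t1, t) \<in> (tree_adj TE S)\<^sup>*" using rtrancl_trans[OF h1 h2[OF \<open>t \<in> N\<close> \<open>v \<in> B t\<close>]] .
      qed
      then show False using uv by blast
    qed
    obtain p2 where p2: "p2 \<in> B t2" "p2 \<in> bd r" using t2 by blast
    have t2N: "t2 \<in> N" using t2 by blast
    have "p2 \<in> Jr" using p2 Bs t2N unfolding Jr_def by blast
    then have "p2 \<in> Q" using QJ by simp
    then show "(t1, t2) \<in> (tree_adj TE {t\<in>N. r \<in> ?B t})\<^sup>*"
      unfolding Q_def S_def using t2N p2 by blast
  qed
  show ?thesis unfolding tree_decomposition_def by (intro conjI tr f2 f3 f4 f5)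
qed



theorem lemma6:
  fixes R :: "rect set"
  assumes "finite R"
    and "\<forall>r\<in>R. valid_rect r"
    and "general_position R"
    and "\<forall>r\<in>R. \<forall>s\<in>R. r \<noteq> s \<and> rset r \<inter> rset s \<noteq> {} \<longrightarrow> corner_intersection r s"
  shows "treewidth R (int_edges R) \<le> 2 * treewidth (joints R) (arr_edges R) + 1"
proof -
  let ?J = "joints R"
  let ?k = "treewidth (joints R) (arr_edges R)"
  let ?V = "{r\<in>R. \<exists>p\<in>?J. p \<in> bd r}"
  let ?B = "\<lambda>B t. {r\<in>R. \<exists>p\<in>B t. p \<in> bd r}"
  have fJ: "finite ?J" using finite_joints[OF assms(3,1)] .
  obtain N TE B where td: "tree_decomposition ?J (arr_edges R) N TE B" and w: "td_width N B = ?k"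
    using tw_attained[OF fJ arr_edges_sub] by blast
  have mtd: "tree_decomposition ?V (int_edges R) N TE (?B B)"
    by (rule mapped_td[OF assms td])
  have bags: "\<forall>t\<in>N. card (?B B t) \<le> 2 * ?k + 2"
  proof
    fix t assume t: "t \<in> N"
    have Bt: "B t \<subseteq> ?J" using td_parts(2)[OF td] t by blast
    have fB: "finite (B t)" using finite_subset[OF Bt fJ] .
    have eq: "?B B t = (\<Union>p\<in>B t. {r\<in>R. p \<in> bd r})" by blast
    have "card (?B B t) \<le> (\<Sum>p\<in>B t. card {r\<in>R. p \<in> bd r})"
      unfolding eq using fB by (rule card_UN_le)
    also have "\<dots> \<le> (\<Sum>p\<in>B t. 2)" by (rule sum_mono) (rule card_bd_le2[OF assms(3,1)])
    also have "\<dots> = 2 * card (B t)" by simp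
    also have "\<dots> \<le> 2 * (?k + 1)" using bag_le[OF td t] w by simp
    finally show "card (?B B t) \<le> 2 * ?k + 2" by simp
  qed
  have "finite (R - ?V)" using assms(1) by simp
  from td_add_isolated[OF this mtd _ bags] obtain N2 TE2 B2 where
    td2: "tree_decomposition (?V \<union> (R - ?V)) (int_edges R) N2 TE2 B2" and c2: "\<forall>t\<in>N2. card (B2 t) \<le> 2 * ?k + 2"
    by auto
  have VR: "?V \<union> (R - ?V) = R" by blast
  have td3: "tree_decomposition R (int_edges R) N2 TE2 B2" using td2 unfolding VR .
  have "treewidth R (int_edges R) \<le> td_width N2 B2" by (rule tw_le[OF assms(1) td3])
  also have "\<dots> \<le> 2 * ?k + 2 - 1" by (rule width_le[OF td3 c2])
  finally show ?thesis by simp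
qed

end
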